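(* Let $e_1,e_2$ be forward events in a pre-reversible LTSI satisfying IRE and RPI. Then $e_1\prec e_2$ if and only if $e_1$ is composable with $e_2$ and not $e_1\odot e_2$.
   Context: A combined LTS consists of a set $\mathsf{Proc}$ of processes, a set $\mathsf{Lab}$ of labels, a forward relation $P\xrightarrow{a}Q$ and a backward relation $P\rightsquigarrow^{a}Q$ with $P\xrightarrow aQ$ iff $Q\rightsquigarrow^aP$. A transition is a forward or backward step $t$; its inverse $\bar t$ is the same step in the opposite direction (forward becomes backward with the same label and vice versa). Transitions are coinitial if they share a source, composable if the target of the first is the source of the second. A path is a finite sequence of composable transitions; it is rooted if its source cannot perform any backward transition. An LTSI is a combined LTS together with an irreflexive symmetric relation $\iota$ on transitions. Axioms: (SP) if $t:P\to Q$ and $u:P\to R$ are coinitial with $t\mathrel\iota u$, then there are $u':Q\to S$ with the same label and direction as $u$ and $t':R\to S$ with the same label and direction as $t$; (BTI) any two distinct coinitial backward transitions are independent; (WF) there is no infinite sequence of processes $P_0,P_1,\dots$ with a forward transition $P_{i+1}\to P_i$ for all $i$; (PCI) if $t:P\to Q$, $u:P\to R$, $u':Q\to S$, $t':R\to S$ where $u'$ has the label and direction of $u$ and $t'$ those of $t$, and $t\mathrel\iota u$, then $u'\mathrel\iota\bar t$. An LTSI is pre-reversible if it satisfies SP, BTI, WF and PCI. Event equivalence $\sim$ is the smallest equivalence relation on transitions such that whenever $t,u,u',t'$ form a square as in PCI with $t\mathrel\iota u$, then $t\sim t'$. Events are $\sim$-classes $[t]$; an event is forward if it is the class of a forward transition,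 and $\bar e=[\bar t]$ for $e=[t]$. (IRE) if $t\sim t'$ and $t'\mathrel\iota u$ then $t\mathrel\iota u$. (RPI) if $t\mathrel\iota t'$ then $\bar t\mathrel\iota t'$. For a path $r$ and event $e$: $\sharp(\varepsilon,e)=0$ and $\sharp(tr,e)=\sharp(r,e)+1$ if $t\in e$, $\sharp(r,e)-1$ if $t\in\bar e$, $\sharp(r,e)$ otherwise. Core independence: $e\odot e'$ iff there are coinitial $t\in e$, $t'\in e'$ with $t\mathrel\iota t'$. For forward events: $e\le e'$ iff for every rooted path $r$, $\sharp(r,e')>0$ implies $\sharp(r,e)>0$; $e<e'$ iff $e\le e'$ and $e\ne e'$; $e_1\prec e_2$ (immediate predecessor) iff $e_1<e_2$ and there is no event $e$ with $e_1<e<e_2$. Events $e_1,e_2$ are composable if there are $t_1\in e_1$, $t_2\in e_2$ with $t_1$ composable with $t_2$. *)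

theory Defs
  imports Main
begin

text \<open>A combined LTS is given by its forward relation \<open>fwd P a Q\<close> (P --a--> Q);
  the backward relation is its converse: P ~~a~~> Q iff Q --a--> P.
  A transition records source, label, direction (True = forward) and target.\<close>

datatype ('p, 'l) trans = Tr (src: 'p) (lbl: 'l) (fw: bool) (tgt: 'p)

definition valid_tr :: "('p \<Rightarrow> 'l \<Rightarrow> 'p \<Rightarrow> bool) \<Rightarrow> ('p, 'l) trans \<Rightarrow> bool" where
  "valid_tr fwd t \<longleftrightarrow>
     (if fw t then fwd (src t) (lbl t) (tgt t) else fwd (tgt t) (lbl t) (src t))"

definition inv_tr :: "('p, 'l) trans \<Rightarrow> ('p, 'l) trans" where
  "inv_tr t = Tr (tgt t) (lbl t) (\<not> fw t) (src t)"

definition square :: "('p \<Rightarrow> 'l \<Rightarrow> 'p \<Rightarrow> bool) \<Rightarrow> ('p, 'l) trans \<Rightarrow> ('p, 'l) trans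
    \<Rightarrow> ('p, 'l) trans \<Rightarrow> ('p, 'l) trans \<Rightarrow> bool" where
  "square fwd t u u' t' \<longleftrightarrow>
     valid_tr fwd t \<and> valid_tr fwd u \<and> valid_tr fwd u' \<and> valid_tr fwd t' \<and>
     src t = src u \<and> src u' = tgt t \<and> src t' = tgt u \<and> tgt u' = tgt t' \<and>
     lbl u' = lbl u \<and> fw u' = fw u \<and> lbl t' = lbl t \<and> fw t' = fw t"

definition LTSI :: "('p \<Rightarrow> 'l \<Rightarrow> 'p \<Rightarrow> bool) \<Rightarrow> (('p,'l) trans \<Rightarrow> ('p,'l) trans \<Rightarrow> bool) \<Rightarrow> bool" where
  "LTSI fwd iota \<longleftrightarrow>
     (\<forall>t u. iota t u \<longrightarrow> valid_tr fwd t \<and> valid_tr fwd u) \<and>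
     (\<forall>t. \<not> iota t t) \<and> (\<forall>t u. iota t u \<longrightarrow> iota u t)"

definition SP where
  "SP fwd iota \<longleftrightarrow> (\<forall>t u. valid_tr fwd t \<and> valid_tr fwd u \<and> src t = src u \<and> iota t u \<longrightarrow>
     (\<exists>u' t'. square fwd t u u' t'))"

definition BTI where
  "BTI fwd iota \<longleftrightarrow> (\<forall>t u. valid_tr fwd t \<and> valid_tr fwd u \<and> \<not> fw t \<and> \<not> fw u \<and>
     src t = src u \<and> t \<noteq> u \<longrightarrow> iota t u)"

definition WF :: "('p \<Rightarrow> 'l \<Rightarrow> 'p \<Rightarrow> bool) \<Rightarrow> bool" where
  "WF fwd \<longleftrightarrow> \<not> (\<exists>P :: nat \<Rightarrow> 'p. \<forall>i. \<exists>a. fwd (P (Suc i)) a (P i))"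

definition PCI where
  "PCI fwd iota \<longleftrightarrow> (\<forall>t u u' t'. square fwd t u u' t' \<and> iota t u \<longrightarrow> iota u' (inv_tr t))"

definition pre_reversible where
  "pre_reversible fwd iota \<longleftrightarrow> LTSI fwd iota \<and> SP fwd iota \<and> BTI fwd iota \<and> WF fwd \<and> PCI fwd iota"

inductive ev_eq :: "('p \<Rightarrow> 'l \<Rightarrow> 'p \<Rightarrow> bool) \<Rightarrow> (('p,'l) trans \<Rightarrow> ('p,'l) trans \<Rightarrow> bool)
    \<Rightarrow> ('p,'l) trans \<Rightarrow> ('p,'l) trans \<Rightarrow> bool"
  for fwd iota where
  ev_refl: "valid_tr fwd t \<Longrightarrow> ev_eq fwd iota t t"
| ev_sym: "ev_eq fwd iota t u \<Longrightarrow> ev_eq fwd iota u t"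
| ev_trans: "ev_eq fwd iota t u \<Longrightarrow> ev_eq fwd iota u v \<Longrightarrow> ev_eq fwd iota t v"
| ev_square: "square fwd t u u' t' \<Longrightarrow> iota t u \<Longrightarrow> ev_eq fwd iota t t'"

definition ev_class where
  "ev_class fwd iota t = {u. ev_eq fwd iota t u}"

definition is_event where
  "is_event fwd iota e \<longleftrightarrow> (\<exists>t. valid_tr fwd t \<and> e = ev_class fwd iota t)"

definition forward_event where
  "forward_event fwd iota e \<longleftrightarrow> (\<exists>t. valid_tr fwd t \<and> fw t \<and> e = ev_class fwd iota t)"

definition ev_bar :: "('p,'l) trans set \<Rightarrow> ('p,'l) trans set" where
  "ev_bar e = inv_tr ` e"

definition IRE where
  "IRE fwd iota \<longleftrightarrow> (\<forall>t t' u. ev_eq fwd iota t t' \<and> iota t' u \<longrightarrow> iota t u)"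

definition RPI where
  "RPI (iota :: ('p,'l) trans \<Rightarrow> ('p,'l) trans \<Rightarrow> bool) \<longleftrightarrow>
     (\<forall>t t'. iota t t' \<longrightarrow> iota (inv_tr t) t')"

fun is_path :: "('p \<Rightarrow> 'l \<Rightarrow> 'p \<Rightarrow> bool) \<Rightarrow> ('p,'l) trans list \<Rightarrow> bool" where
  "is_path fwd [] = True"
| "is_path fwd [t] = valid_tr fwd t"
| "is_path fwd (t # u # r) = (valid_tr fwd t \<and> tgt t = src u \<and> is_path fwd (u # r))"

definition rooted_path where
  "rooted_path fwd r \<longleftrightarrow> is_path fwd r \<and>
     (r \<noteq> [] \<longrightarrow> \<not> (\<exists>a Q. fwd Q a (src (hd r))))"

fun count_ev :: "('p,'l) trans list \<Rightarrow> ('p,'l) trans set \<Rightarrow> int" where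
  "count_ev [] e = 0"
| "count_ev (t # r) e = count_ev r e +
     (if t \<in> e then 1 else if t \<in> ev_bar e then -1 else 0)"

definition core_indep where
  "core_indep iota e e' \<longleftrightarrow> (\<exists>t\<in>e. \<exists>t'\<in>e'. src t = src t' \<and> iota t t')"

definition ev_le where
  "ev_le fwd e e' \<longleftrightarrow> (\<forall>r. rooted_path fwd r \<longrightarrow> count_ev r e' > 0 \<longrightarrow> count_ev r e > 0)"

definition ev_less where
  "ev_less fwd e e' \<longleftrightarrow> ev_le fwd e e' \<and> e \<noteq> e'"

definition ev_prec where
  "ev_prec fwd iota e1 e2 \<longleftrightarrow> ev_less fwd e1 e2 \<and>
     \<not> (\<exists>e. forward_event fwd iota e \<and> ev_less fwd e1 e \<and> ev_less fwd e e2)"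

definition ev_composable where
  "ev_composable e1 e2 \<longleftrightarrow> (\<exists>t1\<in>e1. \<exists>t2\<in>e2. tgt t1 = src t2)"

end

theory Submission
  imports Defs "HOL-Library.Multiset"
begin

lemma inv_inv[simp]: "inv_tr (inv_tr t) = t"
  by (cases t) (simp add: inv_tr_def)

lemma inv_simps[simp]: "src (inv_tr t) = tgt t" "tgt (inv_tr t) = src t"
  "lbl (inv_tr t) = lbl t" "fw (inv_tr t) = (\<not> fw t)"
  by (simp_all add: inv_tr_def)

lemma valid_inv[simp]: "valid_tr fwd (inv_tr t) = valid_tr fwd t"
  by (simp add: valid_tr_def inv_tr_def)

lemma square_sym: "square fwd t u u' t' \<Longrightarrow> square fwd u t t' u'"
  by (auto simp: square_def)

lemma tr_eta: "t = Tr (src t) (lbl t) (fw t) (tgt t)"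
  by (cases t) simp

locale ctx =
  fixes fwd :: "'p \<Rightarrow> 'l \<Rightarrow> 'p \<Rightarrow> bool"
    and iota :: "('p,'l) trans \<Rightarrow> ('p,'l) trans \<Rightarrow> bool"
  assumes pr: "pre_reversible fwd iota" and ire: "IRE fwd iota" and rpi: "RPI iota"
begin

lemma iota_sym: "iota t u \<Longrightarrow> iota u t"
  using pr by (auto simp: pre_reversible_def LTSI_def)

lemma iota_irr: "\<not> iota t t"
  using pr by (auto simp: pre_reversible_def LTSI_def)

lemma iota_valid: "iota t u \<Longrightarrow> valid_tr fwd t \<and> valid_tr fwd u"
  using pr by (auto simp: pre_reversible_def LTSI_def)

lemma rpi': "iota t u \<Longrightarrow> iota (inv_tr t) u"
  using rpi by (auto simp: RPI_def)

lemma ire': "ev_eq fwd iota t t' \<Longrightarrow> iota t' u \<Longrightarrow> iota t u"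
  using ire by (auto simp: IRE_def)

lemma sp': "valid_tr fwd t \<Longrightarrow> valid_tr fwd u \<Longrightarrow> src t = src u \<Longrightarrow> iota t u
   \<Longrightarrow> \<exists>u' t'. square fwd t u u' t'"
  using pr by (auto simp: pre_reversible_def SP_def)

lemma bti': "valid_tr fwd t \<Longrightarrow> valid_tr fwd u \<Longrightarrow> \<not> fw t \<Longrightarrow> \<not> fw u \<Longrightarrow>
     src t = src u \<Longrightarrow> t \<noteq> u \<Longrightarrow> iota t u"
  using pr by (auto simp: pre_reversible_def BTI_def)

lemma pci': "square fwd t u u' t' \<Longrightarrow> iota t u \<Longrightarrow> iota u' (inv_tr t)"
  using pr by (auto simp: pre_reversible_def PCI_def)

definition W where "W = {(Q,P). \<exists>a. fwd Q a P}"

lemma wfW: "wf W"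
proof -
  have "WF fwd" using pr by (simp add: pre_reversible_def)
  then show ?thesis unfolding WF_def W_def wf_iff_no_infinite_down_chain by auto
qed

lemma ev_eq_valid: "ev_eq fwd iota t u \<Longrightarrow> valid_tr fwd t \<and> valid_tr fwd u"
  by (induct rule: ev_eq.induct) (auto simp: square_def)

lemma ev_eq_fw: "ev_eq fwd iota t u \<Longrightarrow> fw t = fw u"
  by (induct rule: ev_eq.induct) (auto simp: square_def)

lemma ev_eq_inv: "ev_eq fwd iota t u \<Longrightarrow> ev_eq fwd iota (inv_tr t) (inv_tr u)"
proof (induct rule: ev_eq.induct)
  case (ev_refl t)
  then show ?case by (simp add: ev_eq.ev_refl)
next
  case (ev_sym t u)
  then show ?case by (blast intro: ev_eq.ev_sym)
next
  case (ev_trans t u v)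
  then show ?case by (blast intro: ev_eq.ev_trans)
next
  case (ev_square t u u' t')
  have i: "iota u' (inv_tr t)" using pci' ev_square by blast
  have "square fwd (inv_tr t) u' u (inv_tr t')"
    using ev_square(1) by (auto simp: square_def)
  then show ?case using iota_sym[OF i] by (rule ev_eq.ev_square)
qed

lemma ev_class_eq: "ev_eq fwd iota t u \<Longrightarrow> ev_class fwd iota t = ev_class fwd iota u"
  unfolding ev_class_def by (blast intro: ev_eq.ev_sym ev_eq.ev_trans)

lemma in_ev_class: "u \<in> ev_class fwd iota t \<longleftrightarrow> ev_eq fwd iota t u"
  by (simp add: ev_class_def)

lemma self_in_class: "valid_tr fwd t \<Longrightarrow> t \<in> ev_class fwd iota t"
  by (simp add: ev_class_def ev_eq.ev_refl)

lemma ev_class_eqD: "ev_class fwd iota t = ev_class fwd iota u \<Longrightarrow> valid_tr fwd u \<Longrightarrow> ev_eq fwd iota t u"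
  using self_in_class[of u] by (auto simp: ev_class_def)

definition fv where "fv t = (if fw t then t else inv_tr t)"
definition Ev where "Ev t = ev_class fwd iota (fv t)"

lemma fv_inv[simp]: "fv (inv_tr t) = fv t" by (simp add: fv_def)
lemma Ev_inv[simp]: "Ev (inv_tr t) = Ev t" by (simp add: Ev_def)
lemma fv_valid[simp]: "valid_tr fwd (fv t) = valid_tr fwd t" by (simp add: fv_def)
lemma fv_fw[simp]: "fw (fv t)" by (simp add: fv_def)

lemma Ev_eq: "ev_eq fwd iota t u \<Longrightarrow> Ev t = Ev u"
  using ev_eq_fw[of t u] ev_class_eq ev_eq_inv by (auto simp: Ev_def fv_def)

lemma iota_fv: "iota t u \<Longrightarrow> iota (fv t) (fv u)"
proof -
  assume a: "iota t u"
  have "iota (fv t) u" using a rpi' by (simp add: fv_def)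
  then have "iota (fv u) (fv t)" using iota_sym rpi' by (simp add: fv_def)
  then show ?thesis using iota_sym by blast
qed

lemma Ev_indep: "iota t y \<Longrightarrow> Ev y \<noteq> Ev t"
proof
  assume a: "iota t y" and e: "Ev y = Ev t"
  have i: "iota (fv t) (fv y)" using iota_fv a by blast
  have "valid_tr fwd (fv y)" using iota_valid a by simp
  then have "ev_eq fwd iota (fv t) (fv y)" using e ev_class_eqD by (simp add: Ev_def)
  then have "iota (fv t) (fv t)" using ire' iota_sym i by blast
  then show False using iota_irr by blast
qed

inductive bpath :: "'p \<Rightarrow> ('p,'l) trans set multiset \<Rightarrow> bool" where
  bp_root: "\<not> (\<exists>a Q. fwd Q a P) \<Longrightarrow> bpath P {#}"
| bp_step: "fwd Q a P \<Longrightarrow> bpath Q m \<Longrightarrow> bpath P (add_mset (ev_class fwd iota (Tr Q a True P)) m)"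

lemma bpath_ex: "\<exists>m. bpath P m"
proof (induction P rule: wf_induct[OF wfW])
  case (1 P)
  show ?case
  proof (cases "\<exists>a Q. fwd Q a P")
    case False
    then show ?thesis using bp_root by blast
  next
    case True
    then obtain a Q where h: "fwd Q a P" by blast
    then have "(Q,P) \<in> W" by (auto simp: W_def)
    then obtain m where "bpath Q m" using 1 by blast
    then show ?thesis using bp_step h by blast
  qed
qed

lemma bpath_unique: "bpath P m1 \<Longrightarrow> bpath P m2 \<Longrightarrow> m1 = m2"
proof (induction P arbitrary: m1 m2 rule: wf_induct[OF wfW])
  case (1 P)
  show ?case
  proof (cases "\<exists>a Q. fwd Q a P")
    case False
    have "m = {#}" if "bpath P m" for m using that False by (cases rule: bpath.cases) auto
    then show ?thesis using 1(2,3) by metis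
  next
    case True
    from 1(2) True obtain Q1 a1 m1' where h1: "fwd Q1 a1 P" "bpath Q1 m1'"
      "m1 = add_mset (ev_class fwd iota (Tr Q1 a1 True P)) m1'" by (auto elim: bpath.cases)
    from 1(3) True obtain Q2 a2 m2' where h2: "fwd Q2 a2 P" "bpath Q2 m2'"
      "m2 = add_mset (ev_class fwd iota (Tr Q2 a2 True P)) m2'" by (auto elim: bpath.cases)
    have W1: "(Q1,P) \<in> W" using h1 by (auto simp: W_def)
    have W2: "(Q2,P) \<in> W" using h2 by (auto simp: W_def)
    show ?thesis
    proof (cases "Q1 = Q2 \<and> a1 = a2")
      case True
      then show ?thesis using 1(1) W1 h1 h2 by auto
    next
      case False
      let ?u1 = "Tr P a1 False Q1"
      let ?u2 = "Tr P a2 False Q2"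
      have v1: "valid_tr fwd ?u1" using h1 by (simp add: valid_tr_def)
      have v2: "valid_tr fwd ?u2" using h2 by (simp add: valid_tr_def)
      have i: "iota ?u1 ?u2" using bti'[OF v1 v2] False by auto
      obtain u' t' where sq: "square fwd ?u1 ?u2 u' t'" using sp'[OF v1 v2 _ i] by auto
      define S where "S = tgt u'"
      have u'eq: "u' = Tr Q1 a2 False S" using sq tr_eta[of u'] by (auto simp: square_def S_def)
      have t'eq: "t' = Tr Q2 a1 False S" using sq tr_eta[of t'] by (auto simp: square_def S_def)
      have f1: "fwd S a2 Q1" using sq u'eq by (auto simp: square_def valid_tr_def)
      have f2: "fwd S a1 Q2" using sq t'eq by (auto simp: square_def valid_tr_def)
      have e1: "ev_eq fwd iota ?u1 t'" using sq i by (rule ev_eq.ev_square)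
      have e2: "ev_eq fwd iota ?u2 u'" using square_sym[OF sq] iota_sym[OF i] by (rule ev_eq.ev_square)
      have c1: "ev_class fwd iota (Tr Q1 a1 True P) = ev_class fwd iota (Tr S a1 True Q2)"
        using ev_class_eq[OF ev_eq_inv[OF e1]] t'eq by (simp add: inv_tr_def)
      have c2: "ev_class fwd iota (Tr Q2 a2 True P) = ev_class fwd iota (Tr S a2 True Q1)"
        using ev_class_eq[OF ev_eq_inv[OF e2]] u'eq by (simp add: inv_tr_def)
      obtain mS where mS: "bpath S mS" using bpath_ex by blast
      have "m1' = add_mset (ev_class fwd iota (Tr S a2 True Q1)) mS"
        using 1(1) W1 h1(2) bp_step[OF f1 mS] by blast
      moreover have "m2' = add_mset (ev_class fwd iota (Tr S a1 True Q2)) mS"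
        using 1(1) W2 h2(2) bp_step[OF f2 mS] by blast
      ultimately show ?thesis using h1 h2 c1 c2 by simp
    qed
  qed
qed

definition N where "N P = (THE m. bpath P m)"

lemma N_bpath: "bpath P (N P)"
  unfolding N_def using bpath_ex bpath_unique by (metis theI)

lemma N_eq: "bpath P m \<Longrightarrow> N P = m"
  using N_bpath bpath_unique by blast

lemma N_root: "\<not> (\<exists>a Q. fwd Q a P) \<Longrightarrow> N P = {#}"
  by (rule N_eq) (rule bp_root)

lemma N_step: "fwd Q a P \<Longrightarrow> N P = add_mset (ev_class fwd iota (Tr Q a True P)) (N Q)"
  by (rule N_eq) (rule bp_step, auto simp: N_bpath)

lemma N_fw: "valid_tr fwd t \<Longrightarrow> fw t \<Longrightarrow> N (tgt t) = add_mset (Ev t) (N (src t))"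
  using N_step[of "src t" "lbl t" "tgt t"] tr_eta[of t]
  by (auto simp: valid_tr_def Ev_def fv_def)

lemma N_bw: "valid_tr fwd t \<Longrightarrow> \<not> fw t \<Longrightarrow> N (src t) = add_mset (Ev t) (N (tgt t))"
  using N_step[of "tgt t" "lbl t" "src t"] tr_eta[of t]
  by (auto simp: valid_tr_def Ev_def fv_def inv_tr_def)


lemma class_mem: "forward_event fwd iota e \<Longrightarrow> t \<in> e \<Longrightarrow> valid_tr fwd t \<and> fw t \<and> Ev t = e"
proof -
  assume fe: "forward_event fwd iota e" and t: "t \<in> e"
  then obtain s where s: "valid_tr fwd s" "fw s" "e = ev_class fwd iota s"
    by (auto simp: forward_event_def)
  then have st: "ev_eq fwd iota s t" using t by (simp add: in_ev_class)
  then have "valid_tr fwd t" "fw t" using ev_eq_valid ev_eq_fw s by auto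
  moreover have "Ev t = e" using Ev_eq[OF st] s by (simp add: Ev_def fv_def)
  ultimately show ?thesis by simp
qed

lemma fe_ex: "forward_event fwd iota e \<Longrightarrow> \<exists>s. valid_tr fwd s \<and> fw s \<and> Ev s = e"
  by (auto simp: forward_event_def Ev_def fv_def)

lemma mem_Ev: "valid_tr fwd t \<Longrightarrow> fw t \<Longrightarrow> t \<in> Ev t"
  by (simp add: Ev_def fv_def self_in_class)

lemma fe_Ev: "valid_tr fwd t \<Longrightarrow> forward_event fwd iota (Ev t)"
  unfolding forward_event_def Ev_def by (rule exI[of _ "fv t"]) simp

lemma count_other: "valid_tr fwd x \<Longrightarrow> Ev x \<noteq> f \<Longrightarrow> count (N (src x)) f = count (N (tgt x)) f"
  by (cases "fw x") (auto simp: N_fw N_bw)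

definition low where "low t = (if fw t then src t else tgt t)"

lemma invariance: "ev_eq fwd iota t t' \<Longrightarrow> (\<forall>y. iota t y \<longrightarrow> Ev y \<noteq> f) \<Longrightarrow>
    count (N (low t)) f = count (N (low t')) f"
proof (induct rule: ev_eq.induct)
  case (ev_refl t)
  then show ?case by simp
next
  case (ev_sym t u)
  have "\<forall>y. iota t y \<longrightarrow> Ev y \<noteq> f"
    using ev_sym(1,3) ire' ev_eq.ev_sym by blast
  then show ?case using ev_sym(2) by simp
next
  case (ev_trans t u v)
  have "\<forall>y. iota u y \<longrightarrow> Ev y \<noteq> f"
    using ev_trans(1,5) ire' ev_eq.ev_sym by blast
  then show ?case using ev_trans by simp
next
  case (ev_square t u u' t')
  have nu: "Ev u \<noteq> f" using ev_square by blast
  have "ev_eq fwd iota u u'"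
    using square_sym[OF ev_square(1)] iota_sym[OF ev_square(2)] by (rule ev_eq.ev_square)
  then have nu': "Ev u' \<noteq> f" using nu Ev_eq by simp
  show ?case
  proof (cases "fw t")
    case True
    then show ?thesis using ev_square(1) count_other[OF _ nu]
      by (auto simp: low_def square_def)
  next
    case False
    then show ?thesis using ev_square(1) count_other[OF _ nu']
      by (auto simp: low_def square_def)
  qed
qed

lemma has_back: "N X \<noteq> {#} \<Longrightarrow> \<exists>a Q. fwd Q a X"
  using N_root by blast

lemma witness: "k < count (N X) e \<Longrightarrow> \<exists>t. valid_tr fwd t \<and> fw t \<and> Ev t = e \<and> count (N (src t)) e = k"
proof (induction X arbitrary: k rule: wf_induct[OF wfW])
  case (1 X)
  then have "N X \<noteq> {#}" by auto
  then obtain a Q where f: "fwd Q a X" using has_back by blast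
  let ?t = "Tr Q a True X"
  have v: "valid_tr fwd ?t" using f by (simp add: valid_tr_def)
  have NX: "N X = add_mset (Ev ?t) (N Q)" using N_fw[OF v] by simp
  have W: "(Q,X) \<in> W" using f by (auto simp: W_def)
  show ?case
  proof (cases "Ev ?t = e")
    case True
    then have c: "count (N X) e = Suc (count (N Q) e)" using NX by simp
    show ?thesis
    proof (cases "k = count (N Q) e")
      case True
      then show ?thesis using v \<open>Ev ?t = e\<close> by (intro exI[of _ ?t]) simp
    next
      case False
      then have "k < count (N Q) e" using 1(2) c by simp
      then show ?thesis using 1(1) W by blast
    qed
  next
    case False
    then have "k < count (N Q) e" using 1(2) NX by simp
    then show ?thesis using 1(1) W by blast
  qed
qed

lemma le1: "count (N X) e \<le> 1"
proof (rule ccontr)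
  assume "\<not> count (N X) e \<le> 1"
  then have c: "1 < count (N X) e" by simp
  have "\<exists>t. valid_tr fwd t \<and> fw t \<and> Ev t = e \<and> count (N (src t)) e = 0"
    by (rule witness[of _ X]) (use c in linarith)
  then obtain t0 where t0: "valid_tr fwd t0" "fw t0" "Ev t0 = e" "count (N (src t0)) e = 0" by blast
  have "\<exists>t. valid_tr fwd t \<and> fw t \<and> Ev t = e \<and> count (N (src t)) e = 1"
    by (rule witness[of _ X]) (use c in linarith)
  then obtain t1 where t1: "valid_tr fwd t1" "fw t1" "Ev t1 = e" "count (N (src t1)) e = 1" by blast
  have "ev_eq fwd iota t0 t1" using t0 t1 ev_class_eqD by (simp add: Ev_def fv_def)
  moreover have "\<forall>y. iota t0 y \<longrightarrow> Ev y \<noteq> e" using Ev_indep t0(3) by blast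
  ultimately have "count (N (low t0)) e = count (N (low t1)) e" by (rule invariance)
  then show False using t0 t1 by (simp add: low_def)
qed

lemma witness2: "e \<in># N X \<Longrightarrow> \<exists>t. valid_tr fwd t \<and> fw t \<and> Ev t = e \<and> N (tgt t) \<subseteq># N X"
proof (induction X rule: wf_induct[OF wfW])
  case (1 X)
  then have "N X \<noteq> {#}" by auto
  then obtain a Q where f: "fwd Q a X" using has_back by blast
  let ?t = "Tr Q a True X"
  have v: "valid_tr fwd ?t" using f by (simp add: valid_tr_def)
  have NX: "N X = add_mset (Ev ?t) (N Q)" using N_fw[OF v] by simp
  have W: "(Q,X) \<in> W" using f by (auto simp: W_def)
  show ?case
  proof (cases "Ev ?t = e")
    case True
    then show ?thesis using v by (intro exI[of _ ?t]) simp
  next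
    case False
    then have "e \<in># N Q" using 1(2) NX by simp
    then obtain t where "valid_tr fwd t \<and> fw t \<and> Ev t = e \<and> N (tgt t) \<subseteq># N Q" using 1(1) W by blast
    moreover have "N Q \<subseteq># N X" using NX by simp
    ultimately show ?thesis using subset_mset.order_trans by blast
  qed
qed

lemma a_prime:
  assumes v1: "valid_tr fwd t1" "fw t1" and v2: "valid_tr fwd t2" "fw t2"
    and c: "tgt t1 = src t2" and ni: "\<not> iota (inv_tr t1) t2" and m: "Ev t2 \<in># N X"
  shows "Ev t1 \<in># N X"
proof -
  obtain t where t: "valid_tr fwd t" "fw t" "Ev t = Ev t2" "N (tgt t) \<subseteq># N X"
    using witness2[OF m] by blast
  have e: "ev_eq fwd iota t2 t" using t v2 ev_class_eqD by (simp add: Ev_def fv_def)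
  have H: "\<forall>y. iota t2 y \<longrightarrow> Ev y \<noteq> Ev t1"
  proof (intro allI impI notI)
    fix y assume i: "iota t2 y" and ey: "Ev y = Ev t1"
    have "valid_tr fwd (fv y)" using iota_valid i by simp
    then have e1: "ev_eq fwd iota t1 (fv y)" using ey v1 ev_class_eqD by (simp add: Ev_def fv_def)
    have "iota (fv t2) (fv y)" using iota_fv i by blast
    then have "iota (fv y) t2" using v2 iota_sym by (simp add: fv_def)
    then have "iota t1 t2" using ire' e1 by blast
    then have "iota (inv_tr t1) t2" by (rule rpi')
    then show False using ni by simp
  qed
  have "count (N (low t2)) (Ev t1) = count (N (low t)) (Ev t1)" using invariance[OF e H] .
  then have "count (N (src t2)) (Ev t1) = count (N (src t)) (Ev t1)" using v2 t by (simp add: low_def)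
  moreover have "Ev t1 \<in># N (src t2)" using N_fw[OF v1] c by simp
  ultimately have "Ev t1 \<in># N (src t)" by (metis count_greater_zero_iff)
  moreover have "N (src t) \<subseteq># N (tgt t)" using N_fw[OF t(1,2)] by simp
  ultimately show ?thesis using t(4) by (meson mset_subset_eqD)
qed

lemma L: "e \<in># N Y \<Longrightarrow> \<exists>v. valid_tr fwd v \<and> \<not> fw v \<and> src v = Y \<and> (\<forall>X. Ev v \<in># N X \<longrightarrow> e \<in># N X)"
proof (induction Y rule: wf_induct[OF wfW])
  case (1 Y)
  then have "N Y \<noteq> {#}" by auto
  then obtain a Q where f: "fwd Q a Y" using has_back by blast
  let ?v = "Tr Y a False Q"
  have v: "valid_tr fwd ?v" using f by (simp add: valid_tr_def)
  have NY: "N Y = add_mset (Ev ?v) (N Q)" using N_bw[OF v] by simp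
  have W: "(Q,Y) \<in> W" using f by (auto simp: W_def)
  show ?case
  proof (cases "Ev ?v = e")
    case True
    then show ?thesis using v by (intro exI[of _ ?v]) simp
  next
    case False
    then have "e \<in># N Q" using 1(2) NY by simp
    then obtain w where w: "valid_tr fwd w" "\<not> fw w" "src w = Q" "\<forall>X. Ev w \<in># N X \<longrightarrow> e \<in># N X"
      using 1(1) W by blast
    show ?thesis
    proof (cases "iota w (inv_tr ?v)")
      case True
      have "src (inv_tr ?v) = src w" using w by simp
      then obtain u' t' where sq: "square fwd (inv_tr ?v) w u' t'"
        using sp'[of "inv_tr ?v" w] v w iota_sym[OF True] by (simp only: valid_inv) blast
      have "ev_eq fwd iota w u'" using square_sym[OF sq] True by (rule ev_eq.ev_square)
      then have "Ev u' = Ev w" using Ev_eq by simp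
      moreover have "valid_tr fwd u'" "\<not> fw u'" "src u' = Y" using sq w by (auto simp: square_def)
      ultimately show ?thesis using w(4) by metis
    next
      case False
      have "\<forall>X. Ev ?v \<in># N X \<longrightarrow> Ev w \<in># N X"
      proof (intro allI impI)
        fix X assume "Ev ?v \<in># N X"
        then have "Ev (inv_tr ?v) \<in># N X" by simp
        then have "Ev (inv_tr w) \<in># N X"
          using a_prime[of "inv_tr w" "inv_tr ?v" X] v w False by simp
        then show "Ev w \<in># N X" by simp
      qed
      then show ?thesis using v w(4) by (intro exI[of _ ?v]) auto
    qed
  qed
qed

lemma count_step: "forward_event fwd iota e \<Longrightarrow> valid_tr fwd t \<Longrightarrow>
   (if t \<in> e then 1 else if t \<in> ev_bar e then -1 else (0::int)) =
   int (count (N (tgt t)) e) - int (count (N (src t)) e)"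
proof -
  assume fe: "forward_event fwd iota e" and v: "valid_tr fwd t"
  have bar: "t \<in> ev_bar e \<longleftrightarrow> inv_tr t \<in> e"
    unfolding ev_bar_def by (metis image_iff inv_inv)
  show ?thesis
  proof (cases "fw t")
    case True
    have "t \<in> e \<longleftrightarrow> Ev t = e" using class_mem[OF fe] mem_Ev[OF v True] by blast
    moreover have "inv_tr t \<notin> e" using class_mem[OF fe] True by fastforce
    ultimately show ?thesis using N_fw[OF v True] bar by auto
  next
    case False
    have "t \<notin> e" using class_mem[OF fe] False by blast
    moreover have "inv_tr t \<in> e \<longleftrightarrow> Ev t = e"
      using class_mem[OF fe, of "inv_tr t"] mem_Ev[of "inv_tr t"] v False by auto
    ultimately show ?thesis using N_bw[OF v False] bar by auto
  qed
qed

lemma count_path: "is_path fwd r \<Longrightarrow> r \<noteq> [] \<Longrightarrow> forward_event fwd iota e \<Longrightarrow>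
   count_ev r e = int (count (N (tgt (last r))) e) - int (count (N (src (hd r))) e)"
proof (induction r)
  case Nil
  then show ?case by simp
next
  case (Cons t r)
  show ?case
  proof (cases r)
    case Nil
    then show ?thesis using Cons count_step[of e t] by simp
  next
    case (Cons u r')
    then have h: "valid_tr fwd t" "tgt t = src u" "is_path fwd r" using Cons.prems by auto
    have "count_ev r e = int (count (N (tgt (last r))) e) - int (count (N (src (hd r))) e)"
      using Cons.IH h Cons.prems Cons by simp
    then show ?thesis using count_step[OF Cons.prems(3) h(1)] h Cons by simp
  qed
qed

lemma is_path_snoc: "is_path fwd r \<Longrightarrow> r \<noteq> [] \<Longrightarrow> tgt (last r) = src t \<Longrightarrow> valid_tr fwd t
   \<Longrightarrow> is_path fwd (r @ [t])"
proof (induction r)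
  case Nil
  then show ?case by simp
next
  case (Cons x r)
  then show ?case by (cases r) auto
qed

lemma reach: "(\<exists>a Q. fwd Q a X) \<Longrightarrow> \<exists>r. rooted_path fwd r \<and> r \<noteq> [] \<and> tgt (last r) = X"
proof (induction X rule: wf_induct[OF wfW])
  case (1 X)
  then obtain a Q where f: "fwd Q a X" by blast
  let ?t = "Tr Q a True X"
  have v: "valid_tr fwd ?t" using f by (simp add: valid_tr_def)
  have W: "(Q,X) \<in> W" using f by (auto simp: W_def)
  show ?case
  proof (cases "\<exists>a Q'. fwd Q' a Q")
    case False
    then show ?thesis using v by (intro exI[of _ "[?t]"]) (auto simp: rooted_path_def)
  next
    case True
    then obtain r where r: "rooted_path fwd r" "r \<noteq> []" "tgt (last r) = Q" using 1(1) W by blast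
    have "is_path fwd (r @ [?t])" using is_path_snoc r v by (simp add: rooted_path_def)
    then show ?thesis using r by (intro exI[of _ "r @ [?t]"]) (auto simp: rooted_path_def)
  qed
qed

lemma ev_le_iff: "forward_event fwd iota e \<Longrightarrow> forward_event fwd iota e' \<Longrightarrow>
   ev_le fwd e e' \<longleftrightarrow> (\<forall>X. e' \<in># N X \<longrightarrow> e \<in># N X)"
proof -
  assume fe: "forward_event fwd iota e" and fe': "forward_event fwd iota e'"
  have cp: "count_ev r f = int (count (N (tgt (last r))) f)"
    if "rooted_path fwd r" "r \<noteq> []" "forward_event fwd iota f" for r f
  proof -
    have "N (src (hd r)) = {#}" using that N_root by (auto simp: rooted_path_def)
    then show ?thesis using count_path[of r f] that by (simp add: rooted_path_def)
  qed
  show ?thesis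
  proof
    assume le: "ev_le fwd e e'"
    show "\<forall>X. e' \<in># N X \<longrightarrow> e \<in># N X"
    proof (intro allI impI)
      fix X assume m: "e' \<in># N X"
      then have "N X \<noteq> {#}" by auto
      then obtain r where r: "rooted_path fwd r" "r \<noteq> []" "tgt (last r) = X"
        using reach has_back by blast
      have "count_ev r e' > 0" using cp[OF r(1,2) fe'] r m by simp
      then have "count_ev r e > 0" using le r by (simp add: ev_le_def)
      then show "e \<in># N X" using cp[OF r(1,2) fe] r by simp
    qed
  next
    assume H: "\<forall>X. e' \<in># N X \<longrightarrow> e \<in># N X"
    show "ev_le fwd e e'"
      unfolding ev_le_def
    proof (intro allI impI)
      fix r assume r: "rooted_path fwd r" and c: "count_ev r e' > 0"
      then have "r \<noteq> []" by auto
      then show "count_ev r e > 0" using cp[OF r _ fe] cp[OF r _ fe'] c H by auto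
    qed
  qed
qed



lemma main:
  assumes fe1: "forward_event fwd iota e1" and fe2: "forward_event fwd iota e2"
  shows "ev_prec fwd iota e1 e2 \<longleftrightarrow> ev_composable e1 e2 \<and> \<not> core_indep iota e1 e2"
proof
  assume P: "ev_prec fwd iota e1 e2"
  then have le: "\<forall>X. e2 \<in># N X \<longrightarrow> e1 \<in># N X" and ne: "e1 \<noteq> e2"
    and nb: "\<not> (\<exists>e. forward_event fwd iota e \<and> ev_less fwd e1 e \<and> ev_less fwd e e2)"
    using ev_le_iff[OF fe1 fe2] by (auto simp: ev_prec_def ev_less_def)
  have nci: "\<not> core_indep iota e1 e2"
  proof
    assume "core_indep iota e1 e2"
    then obtain t t' where t: "t \<in> e1" "t' \<in> e2" "src t = src t'" "iota t t'"
      by (auto simp: core_indep_def)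
    have ct: "valid_tr fwd t" "fw t" "Ev t = e1" using class_mem[OF fe1 t(1)] by auto
    have ct': "valid_tr fwd t'" "fw t'" "Ev t' = e2" using class_mem[OF fe2 t(2)] by auto
    have "e2 \<in># N (tgt t')" using N_fw[OF ct'(1,2)] ct' by simp
    then have "e1 \<in># N (tgt t')" using le by blast
    then have "e1 \<in># N (src t)" using N_fw[OF ct'(1,2)] ct' ne t(3) by simp
    then have "count (N (tgt t)) e1 \<ge> 2" using N_fw[OF ct(1,2)] ct
      by (simp add: Suc_le_eq count_greater_zero_iff)
    then show False using le1[of "tgt t" e1] by simp
  qed
  have comp: "ev_composable e1 e2"
  proof -
    have D: "\<forall>t2. valid_tr fwd t2 \<and> fw t2 \<and> Ev t2 = e2 \<and> src t2 = Y \<longrightarrow> ev_composable e1 e2" for Y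
    proof (induction Y rule: wf_induct[OF wfW])
      case (1 Y)
      show ?case
      proof (intro allI impI)
        fix t2 assume t2: "valid_tr fwd t2 \<and> fw t2 \<and> Ev t2 = e2 \<and> src t2 = Y"
        have NT: "N (tgt t2) = add_mset e2 (N Y)" using N_fw t2 by auto
        have "e2 \<in># N (tgt t2)" using NT by simp
        then have "e1 \<in># N (tgt t2)" using le by blast
        then have "e1 \<in># N Y" using NT ne by simp
        then obtain v where v: "valid_tr fwd v" "\<not> fw v" "src v = Y" "\<forall>X. Ev v \<in># N X \<longrightarrow> e1 \<in># N X"
          using L by blast
        show "ev_composable e1 e2"
        proof (cases "Ev v = e1")
          case True
          have "inv_tr v \<in> e1" using mem_Ev[of "inv_tr v"] v True by simp
          moreover have "t2 \<in> e2" using mem_Ev t2 by blast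
          ultimately show ?thesis using v t2 unfolding ev_composable_def by force
        next
          case False
          show ?thesis
          proof (cases "iota v t2")
            case True
            have "\<exists>u' t'. square fwd v t2 u' t'" using sp'[of v t2] v t2 True by auto
            then obtain u' t' where sq: "square fwd v t2 t' u'" by blast
            have "ev_eq fwd iota t2 t'" using square_sym[OF sq] iota_sym[OF True] by (rule ev_eq.ev_square)
            then have "Ev t' = e2" using Ev_eq t2 by auto
            moreover have "valid_tr fwd t'" "fw t'" "src t' = tgt v" using sq t2 by (auto simp: square_def)
            moreover have "(tgt v, Y) \<in> W" using v by (auto simp: W_def valid_tr_def)
            ultimately show ?thesis using 1 by blast
          next
            case False
            have g2: "\<forall>X. e2 \<in># N X \<longrightarrow> Ev v \<in># N X"
              using a_prime[of "inv_tr v" t2] v t2 False by auto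
            have "Ev v \<noteq> e2"
            proof
              assume "Ev v = e2"
              then have "count (N (tgt t2)) e2 \<ge> 2" using NT N_bw[OF v(1,2)] v(3) by simp
              then show False using le1[of "tgt t2" e2] by simp
            qed
            moreover have fg: "forward_event fwd iota (Ev v)" using fe_Ev v by blast
            ultimately have "ev_less fwd e1 (Ev v)" "ev_less fwd (Ev v) e2"
              using ev_le_iff[OF fe1 fg] ev_le_iff[OF fg fe2] v(4) g2 \<open>Ev v \<noteq> e1\<close>
              by (auto simp: ev_less_def)
            then show ?thesis using nb fg by blast
          qed
        qed
      qed
    qed
    obtain s where "valid_tr fwd s" "fw s" "Ev s = e2" using fe_ex[OF fe2] by blast
    then show ?thesis using D by blast
  qed
  show "ev_composable e1 e2 \<and> \<not> core_indep iota e1 e2" using comp nci by simp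
next
  assume "ev_composable e1 e2 \<and> \<not> core_indep iota e1 e2"
  then obtain t1 t2 where t: "t1 \<in> e1" "t2 \<in> e2" "tgt t1 = src t2" and nci: "\<not> core_indep iota e1 e2"
    by (auto simp: ev_composable_def)
  have c1: "valid_tr fwd t1" "fw t1" "Ev t1 = e1" using class_mem[OF fe1 t(1)] by auto
  have c2: "valid_tr fwd t2" "fw t2" "Ev t2 = e2" using class_mem[OF fe2 t(2)] by auto
  have ni: "\<not> iota (inv_tr t1) t2"
  proof
    assume i: "iota (inv_tr t1) t2"
    obtain u' t' where sq: "square fwd (inv_tr t1) t2 t' u'"
      using sp'[of "inv_tr t1" t2] c1 c2 i t(3) by auto
    have e: "ev_eq fwd iota t2 t'" using square_sym[OF sq] iota_sym[OF i] by (rule ev_eq.ev_square)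
    have v': "valid_tr fwd t'" "fw t'" "src t' = src t1" using sq c2 by (auto simp: square_def)
    have "t' \<in> e2" using mem_Ev[OF v'(1,2)] Ev_eq[OF e] c2 by simp
    moreover have "iota t1 t2" using rpi'[OF i] by simp
    then have "iota t' t1" using ire'[OF ev_eq.ev_sym[OF e]] iota_sym by blast
    ultimately have "core_indep iota e1 e2" using t(1) v'(3) iota_sym[of t' t1] unfolding core_indep_def by metis
    then show False using nci by simp
  qed
  have le: "\<forall>X. e2 \<in># N X \<longrightarrow> e1 \<in># N X"
    using a_prime[OF c1(1,2) c2(1,2) t(3) ni] c1 c2 by auto
  have NQ: "N (tgt t1) = add_mset e1 (N (src t1))" using N_fw[OF c1(1,2)] c1 by simp
  have NR: "N (tgt t2) = add_mset e2 (N (tgt t1))" using N_fw[OF c2(1,2)] c2 t(3) by simp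
  have nP: "e1 \<notin># N (src t1)"
  proof
    assume "e1 \<in># N (src t1)"
    then have "count (N (tgt t1)) e1 \<ge> 2" using NQ by (simp add: Suc_le_eq count_greater_zero_iff)
    then show False using le1[of "tgt t1" e1] by simp
  qed
  have ne: "e1 \<noteq> e2"
  proof
    assume "e1 = e2"
    then have "count (N (tgt t2)) e1 \<ge> 2" using NQ NR by simp
    then show False using le1[of "tgt t2" e1] by simp
  qed
  have nb: "\<not> (\<exists>e. forward_event fwd iota e \<and> ev_less fwd e1 e \<and> ev_less fwd e e2)"
  proof
    assume "\<exists>e. forward_event fwd iota e \<and> ev_less fwd e1 e \<and> ev_less fwd e e2"
    then obtain e where fe: "forward_event fwd iota e" and l1: "ev_less fwd e1 e" and l2: "ev_less fwd e e2"
      by blast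
    have a: "\<forall>X. e \<in># N X \<longrightarrow> e1 \<in># N X" "e \<noteq> e1"
      using l1 ev_le_iff[OF fe1 fe] by (auto simp: ev_less_def)
    have b: "\<forall>X. e2 \<in># N X \<longrightarrow> e \<in># N X" "e \<noteq> e2"
      using l2 ev_le_iff[OF fe fe2] by (auto simp: ev_less_def)
    have "e2 \<in># N (tgt t2)" using NR by simp
    then have "e \<in># N (tgt t2)" using b by blast
    then have "e \<in># N (src t1)" using NR NQ a(2) b(2) by simp
    then show False using a nP by blast
  qed
  show "ev_prec fwd iota e1 e2"
    using le ne nb ev_le_iff[OF fe1 fe2] by (auto simp: ev_prec_def ev_less_def)
qed

end

theorem lemma5p10:
  fixes fwd :: "'p \<Rightarrow> 'l \<Rightarrow> 'p \<Rightarrow> bool"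
    and iota :: "('p,'l) trans \<Rightarrow> ('p,'l) trans \<Rightarrow> bool"
  assumes "pre_reversible fwd iota" and "IRE fwd iota" and "RPI iota"
    and "forward_event fwd iota e1" and "forward_event fwd iota e2"
  shows "ev_prec fwd iota e1 e2 \<longleftrightarrow> ev_composable e1 e2 \<and> \<not> core_indep iota e1 e2"
proof -
  interpret ctx fwd iota using assms(1-3) by unfold_locales
  show ?thesis using main assms(4,5) by blast
qed

end
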